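(* Let $\alpha\in(0,1)$, $m=\alpha n$, $c\in\mathbb{N}$, $q=2^{m+c}$. Then for all $\gamma>1$ and $k\ge 3.6-\frac54\log_2\alpha$, setting $f=\frac{k\ln m}{m}$, there exists $N_k>0$ such that for all $n\ge N_k$, $\epsilon(n,m,q,f)\le\gamma\frac{2^c}{q-1}$.
   Context: For $q\ge2$: $w^*(n,q)=\max\{w\ge0:\sum_{j=1}^w\binom{n}{j}\le q-1\}$, $r(n,q)=q-1-\sum_{w=1}^{w^*(n,q)}\binom{n}{w}$, and $$\epsilon(n,m,q,f)=\frac{1}{q-1}\left[\sum_{w=1}^{w^*(n,q)}\binom{n}{w}\frac{1}{2^m}(1+(1-2f)^w)^m+\frac{r(n,q)}{2^m}(1+(1-2f)^{w^*(n,q)+1})^m\right].$$ $\ln$ is the natural logarithm. *)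

theory Defs
  imports Complex_Main
begin

definition wstar :: "nat \<Rightarrow> nat \<Rightarrow> nat" where
  "wstar n q = (GREATEST w. (\<Sum>j=1..w. n choose j) \<le> q - 1)"

definition rr :: "nat \<Rightarrow> nat \<Rightarrow> nat" where
  "rr n q = q - 1 - (\<Sum>w=1..wstar n q. n choose w)"

definition eps :: "nat \<Rightarrow> nat \<Rightarrow> nat \<Rightarrow> real \<Rightarrow> real" where
  "eps n m q f = (1 / (real q - 1)) *
     ((\<Sum>w=1..wstar n q. real (n choose w) * (1 / 2 ^ m) * (1 + (1 - 2 * f) ^ w) ^ m)
      + real (rr n q) / 2 ^ m * (1 + (1 - 2 * f) ^ (wstar n q + 1)) ^ m)"

end

theory Submission
  imports Defs "HOL-Real_Asymp.Real_Asymp"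
begin

lemma pow_fact_le_exp:
  assumes "0 \<le> (x::real)" shows "x ^ n / fact n \<le> exp x"
proof -
  have s: "(\<lambda>n. x^n /\<^sub>R fact n) sums exp x" by (rule exp_converges)
  have "sum (\<lambda>n. x^n /\<^sub>R fact n) {n} \<le> suminf (\<lambda>n. x^n /\<^sub>R fact n)"
    by (rule sum_le_suminf) (use s assms in \<open>auto simp: sums_iff\<close>)
  then show ?thesis using s by (simp add: sums_iff divide_inverse mult.commute)
qed

lemma binom_exp_bound:
  assumes "1 \<le> w" "0 < n"
  shows "real (n choose w) \<le> exp (real w * (1 + ln (real n) - ln (real w)))"
proof -
  have w0: "0 < real w" using assms by simp
  have "real (n choose w) * fact w \<le> real n ^ w"
    using binomial_fact_pow[of n w] by (metis of_nat_fact of_nat_le_iff of_nat_mult of_nat_power)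
  hence 1: "real (n choose w) \<le> real n ^ w / fact w"
    by (simp add: field_simps)
  have "real w ^ w / fact w \<le> exp (real w)" by (rule pow_fact_le_exp) simp
  hence 2: "real w ^ w / exp (real w) \<le> fact w"
    by (simp add: field_simps)
  have pw: "0 < real w ^ w / exp (real w)" using w0 by simp
  have "real n ^ w / fact w \<le> real n ^ w / (real w ^ w / exp (real w))"
    proof -
    have "0 < fact w * (real w ^ w / exp (real w))" by (rule mult_pos_pos[OF fact_gt_zero pw])
    then show ?thesis by (intro divide_left_mono[OF 2]) simp_all
  qed
  also have "\<dots> = exp (real w * ln (real n)) * exp (real w) / exp (real w * ln (real w))"
  proof -
    have en: "exp (real w * ln (real n)) = real n ^ w" using assms by (simp add: exp_of_nat_mult)
    have ew: "exp (real w * ln (real w)) = real w ^ w" using w0 by (simp add: exp_of_nat_mult)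
    show ?thesis unfolding en ew using w0 by (simp add: field_simps)
  qed
  also have "\<dots> = exp (real w * (1 + ln (real n) - ln (real w)))"
    by (simp add: exp_add[symmetric] exp_diff[symmetric] algebra_simps)
  finally show ?thesis using 1 by linarith
qed

lemma Phi_mono:
  fixes z1 z2 n :: real
  assumes "0 < z1" "z1 \<le> z2" "z2 \<le> n"
  shows "z1 * (1 + ln n - ln z1) \<le> z2 * (1 + ln n - ln z2)"
proof -
  have "ln z2 - ln z1 \<le> z2/z1 - 1"
    using ln_le_minus_one[of "z2/z1"] assms by (simp add: ln_div)
  hence a: "z1 * (ln z2 - ln z1) \<le> z2 - z1"
    using assms by (simp add: field_simps)
  have b: "(z2 - z1) * ln z2 \<le> (z2 - z1) * ln n"
    using assms by (intro mult_left_mono) auto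
  show ?thesis using a b by (simp add: algebra_simps)
qed

lemma g_exp_bound:
  fixes y :: real
  assumes "0 \<le> y"
  shows "1 / 2 ^ m * (1 + y) ^ m \<le> exp (- real m * (1 - y) / 2)"
proof -
  have e: "1 + (- (1 - y) / 2) \<le> exp (- (1 - y) / 2)" by (rule exp_ge_add_one_self)
  have eq: "1 + (- (1 - y) / 2) = (1 + y) / 2" by (simp add: field_simps)
  have "(1 + y) / 2 \<le> exp (- (1 - y) / 2)" using e unfolding eq .
  hence "((1 + y) / 2) ^ m \<le> exp (- (1 - y) / 2) ^ m"
    using assms by (intro power_mono) auto
  also have "\<dots> = exp (- real m * (1 - y) / 2)"
    by (simp add: exp_of_nat_mult[symmetric]) (simp add: algebra_simps)
  finally show ?thesis by (simp add: power_divide)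
qed

lemma geom_sum_bound:
  fixes \<rho> :: real
  assumes "0 \<le> \<rho>" "\<rho> \<le> 1/2"
  shows "(\<Sum>w\<in>{1..<W}. \<rho> ^ w) \<le> 2 * \<rho>"
proof -
  have eq: "(1 - \<rho>) * (\<Sum>w\<in>{1..<Suc V}. \<rho> ^ w) = \<rho> - \<rho> ^ Suc V" for V
  proof (induction V)
    case 0 then show ?case by simp
  next
    case (Suc V)
    have h: "(\<Sum>w\<in>{1..<Suc (Suc V)}. \<rho> ^ w) = (\<Sum>w\<in>{1..<Suc V}. \<rho> ^ w) + \<rho> ^ Suc V"
      by (rule sum.atLeastLessThan_Suc) simp
    have gen: "(1 - \<rho>) * S = \<rho> - \<rho> ^ Suc V \<Longrightarrow> (1 - \<rho>) * (S + \<rho> ^ Suc V) = \<rho> - \<rho> ^ Suc (Suc V)" for S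
    proof -
      assume hh: "(1 - \<rho>) * S = \<rho> - \<rho> ^ Suc V"
      have "(1 - \<rho>) * (S + \<rho> ^ Suc V) - (\<rho> - \<rho> ^ Suc (Suc V)) = (1 - \<rho>) * S - (\<rho> - \<rho> ^ Suc V)"
        by (simp add: algebra_simps)
      then show ?thesis using hh by simp
    qed
    show ?case unfolding h by (rule gen[OF Suc.IH])
  qed
  show ?thesis
  proof (cases W)
    case 0 then show ?thesis using assms by simp
  next
    case (Suc V)
    have "(1 - \<rho>) * (\<Sum>w\<in>{1..<W}. \<rho> ^ w) \<le> \<rho>" using eq[of V] Suc assms by simp
    moreover have "0 \<le> (\<Sum>w\<in>{1..<W}. \<rho> ^ w)" using assms by (intro sum_nonneg) auto
    moreover have "(1/2) * (\<Sum>w\<in>{1..<W}. \<rho> ^ w) \<le> (1 - \<rho>) * (\<Sum>w\<in>{1..<W}. \<rho> ^ w)"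
      using assms calculation(2) by (intro mult_right_mono) auto
    ultimately show ?thesis by linarith
  qed
qed

lemma decomp:
  fixes C g :: "nat \<Rightarrow> real" and r :: real
  assumes g0: "\<And>w. 0 \<le> g w" and gm: "\<And>v w. v \<le> w \<Longrightarrow> g w \<le> g v"
    and C0: "\<And>w. 0 \<le> C w" and r0: "0 \<le> r" and rC: "r \<le> C (s+1)"
  shows "(\<Sum>w=1..s. C w * g w) + r * g (s+1)
     \<le> (\<Sum>w\<in>{1..<W}. C w * g w) + ((\<Sum>w=1..s. C w) + r) * g W"
proof -
  define h where "h w = (if w < W then C w * g w else 0)" for w
  have t: "C w * g w \<le> C w * g W + h w" for w
  proof (cases "w < W")
    case True then show ?thesis using C0 g0 by (simp add: h_def)
  next
    case False then show ?thesis using C0 gm[of W w] by (simp add: h_def mult_left_mono)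
  qed
  have tr: "r * g (s+1) \<le> r * g W + h (s+1)"
  proof (cases "s+1 < W")
    case True then show ?thesis using C0 g0 rC r0 unfolding h_def
      by (simp add: mult_right_mono add_increasing)
  next
    case False then show ?thesis using r0 gm[of W "s+1"] by (simp add: h_def mult_left_mono)
  qed
  have s1: "(\<Sum>w=1..s. C w * g w) \<le> (\<Sum>w=1..s. C w) * g W + (\<Sum>w=1..s. h w)"
    using sum_mono[of "{1..s}" "\<lambda>w. C w * g w" "\<lambda>w. C w * g W + h w", OF t]
    by (simp add: sum.distrib sum_distrib_right)
  have "(\<Sum>w=1..s. h w) + h (s+1) = (\<Sum>w=1..s+1. h w)" by simp
  also have "\<dots> = (\<Sum>w\<in>{1..s+1} \<inter> {..<W}. C w * g w)"
    unfolding h_def by (simp add: sum.inter_restrict)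
  also have "\<dots> \<le> (\<Sum>w\<in>{1..<W}. C w * g w)"
    by (rule sum_mono2) (use C0 g0 in auto)
  finally show ?thesis using s1 tr by (simp add: algebra_simps)
qed


lemma asy1: "0 < e \<Longrightarrow> ((\<lambda>m::real. m * exp (- e * m)) \<longlongrightarrow> 0) at_top"
  by real_asymp
lemma asy2: "s < 0 \<Longrightarrow> ((\<lambda>m::real. m powr s) \<longlongrightarrow> 0) at_top"
  by real_asymp
lemma asy3: "s < 1 \<Longrightarrow> 0 < e \<Longrightarrow> ((\<lambda>m::real. m powr s / (e * m)) \<longlongrightarrow> 0) at_top"
  by real_asymp
lemma asy4: "s < 0 \<Longrightarrow> ((\<lambda>m::real. exp (m powr s)) \<longlongrightarrow> 1) at_top"
  by real_asymp
lemma asy5: "0 < k \<Longrightarrow> ((\<lambda>m::real. k * ln m / m) \<longlongrightarrow> 0) at_top"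
  by real_asymp
lemma asy6: "((\<lambda>t::real. t * (1 + a - ln t)) \<longlongrightarrow> 0) (at_right 0)"
  by real_asymp

lemma powr_aux: "0 < (x::real) \<Longrightarrow> x * x powr (- e) = x powr (1 - e)"
  by (simp add: powr_diff powr_minus divide_inverse)

lemma ln_le_aux: "0 < (x::real) \<Longrightarrow> 0 < y \<Longrightarrow> ln x \<le> ln y + x / y - 1"
  using ln_le_minus_one[of "x/y"] by (simp add: ln_div)

lemma k_bound:
  fixes \<alpha> k :: real
  assumes "0 < \<alpha>" "\<alpha> < 1" "k \<ge> 3.6 - 5/4 * log 2 \<alpha>"
  shows "ln 2 + 1 + ln k - ln \<alpha> < k" and "3.6 \<le> k"
proof -
  define a where "a = - ln \<alpha>"
  have a0: "0 < a" using assms by (simp add: a_def)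
  have l2pos: "0 < ln (2::real)" by simp
  have "(1.2::real) ^ 4 \<le> exp 0.2 ^ 4"
    by (rule power_mono) (use exp_ge_add_one_self[of "0.2::real"] in auto)
  also have "exp (0.2::real) ^ 4 = exp 0.8" by (simp add: exp_of_nat_mult[symmetric])
  finally have "2 < exp (0.8::real)" by (simp add: power4_eq_xxxx)
  hence "ln 2 < ln (exp (0.8::real))" by (subst ln_less_cancel_iff) auto
  hence l2: "ln 2 < (0.8::real)" by simp
  have "(1.65::real) ^ 4 \<le> exp 0.65 ^ 4"
    by (rule power_mono) (use exp_ge_add_one_self[of "0.65::real"] in auto)
  also have "exp (0.65::real) ^ 4 = exp 2.6" by (simp add: exp_of_nat_mult[symmetric])
  finally have "7.2 < exp (2.6::real)" by (simp add: power4_eq_xxxx)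
  hence "ln 7.2 < ln (exp (2.6::real))" by (subst ln_less_cancel_iff) auto
  hence "ln 7.2 < (2.6::real)" by simp
  moreover have "ln (7.2::real) = ln 2 + ln 3.6" using ln_mult[of "2::real" "3.6"] by simp
  ultimately have l72: "ln 2 + ln 3.6 < (2.6::real)" by simp
  have "log 2 \<alpha> = - a / ln 2" by (simp add: log_def a_def)
  hence k1: "k \<ge> 3.6 + 5/4 * (a / ln 2)" using assms(3) by simp
  have "a / 0.8 \<le> a / ln 2" using a0 l2 l2pos by (intro divide_left_mono) auto
  with k1 have kk0: "k \<ge> 3.6 + 25/16 * a" by simp
  define k0 where "k0 = 3.6 + 25/16 * a"
  have k0p: "k0 \<ge> 3.6" using a0 by (simp add: k0_def)
  have kk: "k \<ge> k0" using kk0 k0_def by simp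
  have lk: "ln k \<le> ln k0 + k/k0 - 1" using k0p kk by (intro ln_le_aux) auto
  have lk0: "ln k0 \<le> ln 3.6 + k0/3.6 - 1" using k0p by (intro ln_le_aux) auto
  have "0 \<le> (k - k0) * (1 - 1/k0)" using kk k0p by (intro mult_nonneg_nonneg) auto
  moreover have "(k - k0) * (1 - 1/k0) = k - k/k0 - k0 + 1" using k0p by (simp add: field_simps)
  ultimately have kq: "k - k/k0 \<ge> k0 - 1" by linarith
  show "ln 2 + 1 + ln k - ln \<alpha> < k"
  proof -
    have e: "k0 / 3.6 = 5/18 * k0" by simp
    obtain L36 where L: "ln (3.6::real) = L36" by blast
    have lk0': "ln k0 \<le> L36 + 5/18 * k0 - 1" using lk0 unfolding L e .
    have l72': "ln 2 + L36 < 2.6" using l72 unfolding L .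
    have A: "ln k \<le> L36 + 5/18*k0 - 2 + k/k0" using lk lk0' by linarith
    have B: "k/k0 \<le> k - k0 + 1" using kq by linarith
    have C: "2.6 + a \<le> 13/18 * k0" using k0_def a0 by linarith
    show ?thesis using A B C l72' a_def by linarith
  qed
  show "3.6 \<le> k" using kk k0p by linarith
qed

theorem lemma8:
  fixes \<alpha> :: real and c :: nat
  assumes "0 < \<alpha>" and "\<alpha> < 1"
  shows "\<forall>\<gamma> :: real. \<forall>k :: real. \<gamma> > 1 \<longrightarrow> k \<ge> 3.6 - 5/4 * log 2 \<alpha> \<longrightarrow>
    (\<exists>N :: real. N > 0 \<and> (\<forall>n m :: nat. real n \<ge> N \<longrightarrow> real m = \<alpha> * real n \<longrightarrow>
       eps n m (2 ^ (m + c)) (k * ln (real m) / real m)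
         \<le> \<gamma> * 2 ^ c / (real ((2::nat) ^ (m + c)) - 1)))"
proof (intro allI impI)
  fix \<gamma> k :: real
  assume g1: "\<gamma> > 1" and kb: "k \<ge> 3.6 - 5/4 * log 2 \<alpha>"
  define a where "a = - ln \<alpha>"
  define l where "l = ln 2 + 1 + ln k + a"
  have lk: "l < k" and k36: "3.6 \<le> k" using k_bound[OF assms kb] by (auto simp: l_def a_def)
  have a0: "0 < a" using assms by (simp add: a_def)
  have k1: "1 < k" using k36 by simp
  have "0 < ln k" using k1 by simp
  hence l1: "1 \<le> l" using a0 by (simp add: l_def)
  define \<delta> where "\<delta> = (k + l) / (4 * k * l)"
  define \<epsilon> where "\<epsilon> = (k - l) / (4 * k)"
  have \<epsilon>0: "0 < \<epsilon>" using lk k1 by (simp add: \<epsilon>_def)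
  have \<delta>0: "0 < \<delta>" using k1 l1 by (simp add: \<delta>_def)
  have p4: "0 < 4 * k * l" using k1 l1 by simp
  have "k \<le> k * l" using mult_left_mono[of 1 l k] l1 k1 by simp
  moreover have "l \<le> k * l" using mult_right_mono[of 1 k l] l1 k1 by simp
  ultimately have "k + l \<le> 1/2 * (4 * k * l)" by simp
  hence \<delta>half: "\<delta> \<le> 1/2" unfolding \<delta>_def using p4 by (simp add: pos_divide_le_eq)
  have "2 * k * \<delta> = (k + l) / (2 * l)" using k1 l1 by (simp add: \<delta>_def field_simps)
  moreover have "1 < (k + l) / (2 * l)" using lk l1 by (simp add: field_simps)
  ultimately have \<delta>k: "1 < 2 * k * \<delta>" by simp
  have \<delta>l: "\<delta> * l = 1/2 - \<epsilon>" using k1 l1 by (simp add: \<delta>_def \<epsilon>_def field_simps)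
  have "eventually (\<lambda>t. t * (1 + a - ln t) < 1/8) (at_right (0::real))"
    using order_tendstoD(2)[OF asy6[of a], of "1/8"] by simp
  then obtain b where b0: "b > 0" and hb: "\<And>t. 0 < t \<Longrightarrow> t < b \<Longrightarrow> t * (1 + a - ln t) < 1/8"
    unfolding eventually_at_right_field by auto
  define \<theta> where "\<theta> = min (b/2) (1/2)"
  have \<theta>0: "0 < \<theta>" using b0 by (simp add: \<theta>_def)
  have \<theta>1: "\<theta> \<le> 1/2" by (simp add: \<theta>_def)
  have \<theta>b: "\<theta> * (1 + a - ln \<theta>) < 1/8" using hb[OF \<theta>0] b0 by (simp add: \<theta>_def)
  have e1: "eventually (\<lambda>m::real. 3 \<le> m) at_top" by (rule eventually_ge_at_top)
  have e2: "eventually (\<lambda>m::real. k * ln m / m \<le> 1/2) at_top"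
    using order_tendstoD(2)[OF asy5[of k], of "1/2"] k1 by (auto elim: eventually_mono)
  have t3: "((\<lambda>m::real. m powr (1 - k/2) / \<alpha>) \<longlongrightarrow> 0) at_top"
    by (rule tendsto_divide_zero[OF asy2]) (use k36 in simp)
  have pm: "0 < min (1/2) ((\<gamma>-1)/12)" using g1 by simp
  have e3: "eventually (\<lambda>m::real. m powr (1 - k/2) / \<alpha> \<le> min (1/2) ((\<gamma>-1)/12)) at_top"
    by (rule eventually_mono[OF order_tendstoD(2)[OF t3 pm]]) (rule less_imp_le)
  have e4: "eventually (\<lambda>m::real. m * exp (- (1/8) * m) \<le> (\<gamma>-1)/6) at_top"
    using order_tendstoD(2)[OF asy1[of "1/8"], of "(\<gamma>-1)/6"] g1 by (auto elim: eventually_mono)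
  have e5a: "eventually (\<lambda>m::real. m powr (1 - 2*k*\<theta>) / (\<epsilon> * m) < 1) at_top"
    using order_tendstoD(2)[OF asy3[of "1 - 2*k*\<theta>" \<epsilon>], of 1] \<epsilon>0 \<theta>0 k1 by simp
  have e5: "eventually (\<lambda>m::real. m powr (1 - 2*k*\<theta>) \<le> \<epsilon> * m) at_top"
    using eventually_conj[OF e5a eventually_gt_at_top[of 0]]
  proof (rule eventually_mono)
    fix m :: real assume h: "m powr (1 - 2*k*\<theta>) / (\<epsilon> * m) < 1 \<and> 0 < m"
    have em: "0 < \<epsilon> * m" using h \<epsilon>0 by simp
    show "m powr (1 - 2*k*\<theta>) \<le> \<epsilon> * m" using h by (simp add: pos_divide_less_eq[OF em])
  qed
  have e6: "eventually (\<lambda>m::real. m * exp (- (\<epsilon>/2) * m) \<le> (\<gamma>-1)/6) at_top"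
    using order_tendstoD(2)[OF asy1[of "\<epsilon>/2"], of "(\<gamma>-1)/6"] g1 \<epsilon>0 by (auto elim: eventually_mono)
  have e7: "eventually (\<lambda>m::real. exp (m powr (1 - 2*k*\<delta>)) \<le> (1+\<gamma>)/2) at_top"
    using order_tendstoD(2)[OF asy4[of "1 - 2*k*\<delta>"], of "(1+\<gamma>)/2"] g1 \<delta>k by (auto elim: eventually_mono)
  have "eventually (\<lambda>m::real. 3 \<le> m \<and> k * ln m / m \<le> 1/2
      \<and> m powr (1 - k/2) / \<alpha> \<le> min (1/2) ((\<gamma>-1)/12)
      \<and> m * exp (- (1/8) * m) \<le> (\<gamma>-1)/6 \<and> m powr (1 - 2*k*\<theta>) \<le> \<epsilon> * m
      \<and> m * exp (- (\<epsilon>/2) * m) \<le> (\<gamma>-1)/6 \<and> exp (m powr (1 - 2*k*\<delta>)) \<le> (1+\<gamma>)/2) at_top"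
    by (intro eventually_conj e1 e2 e3 e4 e5 e6 e7)
  then obtain M0 where M0: "\<And>m. m \<ge> M0 \<Longrightarrow> 3 \<le> m \<and> k * ln m / m \<le> 1/2
      \<and> m powr (1 - k/2) / \<alpha> \<le> min (1/2) ((\<gamma>-1)/12)
      \<and> m * exp (- (1/8) * m) \<le> (\<gamma>-1)/6 \<and> m powr (1 - 2*k*\<theta>) \<le> \<epsilon> * m
      \<and> m * exp (- (\<epsilon>/2) * m) \<le> (\<gamma>-1)/6 \<and> exp (m powr (1 - 2*k*\<delta>)) \<le> (1+\<gamma>)/2"
    unfolding eventually_at_top_linorder by blast
  define N where "N = max (M0 / \<alpha>) (real c / (1 - \<alpha>) + 1)"
  show "\<exists>N :: real. N > 0 \<and> (\<forall>n m :: nat. real n \<ge> N \<longrightarrow> real m = \<alpha> * real n \<longrightarrow>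
       eps n m (2 ^ (m + c)) (k * ln (real m) / real m)
         \<le> \<gamma> * 2 ^ c / (real ((2::nat) ^ (m + c)) - 1))"
  proof (intro exI[of _ N] conjI allI impI)
    have "0 \<le> real c / (1 - \<alpha>)" by (rule divide_nonneg_pos) (use assms in auto)
    hence "0 < real c / (1 - \<alpha>) + 1" by linarith
    then show "0 < N" unfolding N_def by linarith
  next
    fix n m :: nat
    assume nN: "N \<le> real n" and mn: "real m = \<alpha> * real n"
    show "eps n m (2 ^ (m + c)) (k * ln (real m) / real m)
         \<le> \<gamma> * 2 ^ c / (real ((2::nat) ^ (m + c)) - 1)"
    proof -
    have "M0 / \<alpha> \<le> real n" using nN unfolding N_def by linarith
    hence "M0 \<le> \<alpha> * real n" using assms(1) by (simp add: pos_divide_le_eq mult.commute)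
    hence "M0 \<le> real m" using mn by simp
    from M0[OF this] have H1: "3 \<le> real m" and H2: "k * ln (real m) / real m \<le> 1/2"
      and H3: "real m powr (1 - k/2) / \<alpha> \<le> min (1/2) ((\<gamma>-1)/12)"
      and H4: "real m * exp (- (1/8) * real m) \<le> (\<gamma>-1)/6"
      and H5: "real m powr (1 - 2*k*\<theta>) \<le> \<epsilon> * real m"
      and H6: "real m * exp (- (\<epsilon>/2) * real m) \<le> (\<gamma>-1)/6"
      and H7: "exp (real m powr (1 - 2*k*\<delta>)) \<le> (1+\<gamma>)/2" by auto
    have m0: "0 < real m" using H1 by simp
    have n_eq: "real n = real m / \<alpha>" using mn assms(1) by simp
    have n0: "0 < real n" using n_eq m0 assms(1) by simp
    have lnn: "ln (real n) = ln (real m) + a" using n_eq m0 assms(1) by (simp add: ln_div a_def)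
    have "real c / (1 - \<alpha>) + 1 \<le> real n" using nN unfolding N_def by linarith
    hence "real c / (1 - \<alpha>) \<le> real n - 1" by linarith
    hence "real c \<le> (real n - 1) * (1 - \<alpha>)" using assms by (simp add: pos_divide_le_eq)
    hence "real c + (1 - \<alpha>) \<le> (1 - \<alpha>) * real n" by (simp add: algebra_simps)
    hence "real m + real c < real n" using mn assms by (simp add: algebra_simps)
    hence mcn: "m + c < n" by linarith
    have mn_le: "real m \<le> real n" using mn assms n0 by (simp add: mult_left_le_one_le)
    define f where "f = k * ln (real m) / real m"
    define x where "x = 1 - 2 * f"
    have lnm0: "0 \<le> ln (real m)" using H1 by simp
    have f0: "0 \<le> f" unfolding f_def using lnm0 k1 m0 by simp
    have fhalf: "f \<le> 1/2" using H2 by (simp add: f_def)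
    have x0: "0 \<le> x" and x1: "x \<le> 1" using f0 fhalf by (auto simp: x_def)
    have fm: "f * real m = k * ln (real m)" using m0 by (simp add: f_def)
    have xe: "x \<le> exp (- 2 * f)" using exp_ge_add_one_self[of "- 2 * f"] by (simp add: x_def)
    have xw: "x ^ w \<le> exp (- 2 * f * real w)" for w
    proof -
      have "x ^ w \<le> exp (- 2 * f) ^ w" by (rule power_mono[OF xe x0])
      also have "\<dots> = exp (- 2 * f * real w)" by (simp add: exp_of_nat_mult[symmetric] mult.commute)
      finally show ?thesis .
    qed
    have xw0: "0 \<le> x ^ w" for w using x0 by simp
    define q where "q = (2::nat) ^ (m + c)"
    have "1 \<le> m + c" using H1 by simp
    hence "(2::nat) ^ 1 \<le> 2 ^ (m + c)" by (rule power_increasing) simp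
    hence q2: "2 \<le> q" by (simp add: q_def)
    have rq: "real q = 2 ^ m * 2 ^ c" by (simp add: q_def power_add)
    have qn: "q < 2 ^ n" unfolding q_def using mcn by (intro power_strict_increasing) auto
    define g where "g w = 1 / 2 ^ m * (1 + x ^ w) ^ m" for w :: nat
    have g0: "0 \<le> g w" for w using xw0[of w] by (simp add: g_def)
    have gm: "g w \<le> g v" if "v \<le> w" for v w
    proof -
      have "x ^ w \<le> x ^ v" using power_decreasing[OF that x0 x1] .
      hence "(1 + x ^ w) ^ m \<le> (1 + x ^ v) ^ m" using xw0[of w] by (intro power_mono) auto
      thus ?thesis by (simp add: g_def divide_right_mono)
    qed
    define P where "P = (\<lambda>w. (\<Sum>j=1..w. n choose j) \<le> q - 1)"
    have sumn: "(\<Sum>j=1..n. n choose j) = 2 ^ n - 1"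
    proof -
      have "(\<Sum>j\<le>n. n choose j) = (n choose 0) + (\<Sum>j=1..n. n choose j)"
        by (simp add: atMost_atLeast0 sum.atLeast_Suc_atMost)
      thus ?thesis using choose_row_sum[of n] by simp
    qed
    have Pb: "y \<le> n" if "P y" for y
    proof (rule ccontr)
      assume "\<not> y \<le> n"
      hence "(\<Sum>j=1..n. n choose j) \<le> (\<Sum>j=1..y. n choose j)" by (intro sum_mono2) auto
      hence "2 ^ n - 1 \<le> q - 1" using that sumn unfolding P_def by simp
      thus False using qn q2 by simp
    qed
    define s where "s = wstar n q"
    have ws: "s = Greatest P" by (simp add: s_def wstar_def P_def)
    have Ps: "P s" unfolding ws by (rule GreatestI_nat[of P 0 n]) (use Pb in \<open>auto simp: P_def\<close>)
    have nPs: "\<not> P (s+1)"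
    proof
      assume "P (s+1)"
      hence "s + 1 \<le> Greatest P" by (rule Greatest_le_nat[of P _ n]) (use Pb in auto)
      thus False using ws by simp
    qed
    have rr_nat: "rr n q = q - 1 - (\<Sum>w=1..s. n choose w)" by (simp add: rr_def s_def)
    have sum_le: "(\<Sum>w=1..s. n choose w) \<le> q - 1" using Ps by (simp add: P_def)
    have rr_eq: "real (rr n q) = real q - 1 - (\<Sum>w=1..s. real (n choose w))"
      using sum_le q2 unfolding rr_nat by (simp add: of_nat_diff)
    have rC: "real (rr n q) \<le> real (n choose (s+1))"
    proof -
      have "\<not> (\<Sum>j=1..s+1. n choose j) \<le> q - 1" using nPs by (simp add: P_def)
      hence "rr n q \<le> n choose (s+1)" unfolding rr_nat by simp
      thus ?thesis by simp
    qed
    define W where "W = nat \<lceil>\<delta> * real m\<rceil>"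
    have W_ge: "\<delta> * real m \<le> real W" unfolding W_def by (rule real_nat_ceiling_ge)
    have W_lt: "real w < \<delta> * real m" if "w < W" for w
    proof -
      have "int w < \<lceil>\<delta> * real m\<rceil>" using that unfolding W_def by linarith
      thus ?thesis by (simp add: less_ceiling_iff)
    qed
    have W_le: "W \<le> m"
    proof (rule ccontr)
      assume "\<not> W \<le> m"
      hence "real m < \<delta> * real m" using W_lt[of m] by simp
      moreover have "\<delta> * real m \<le> 1/2 * real m" using \<delta>half m0 by (intro mult_right_mono) auto
      ultimately show False using m0 by linarith
    qed
    define C where "C w = real (n choose w)" for w
    define r where "r = real (rr n q)"
    have C0: "0 \<le> C w" for w by (simp add: C_def)
    have r0: "0 \<le> r" by (simp add: r_def)
    have eps_eq: "eps n m q f = 1 / (real q - 1) * ((\<Sum>w=1..s. C w * g w) + r * g (s+1))"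
      unfolding eps_def g_def C_def r_def s_def x_def by (simp add: mult.assoc)
    have dec: "(\<Sum>w=1..s. C w * g w) + r * g (s+1)
        \<le> (\<Sum>w\<in>{1..<W}. C w * g w) + ((\<Sum>w=1..s. C w) + r) * g W"
      by (rule decomp[OF g0 gm C0 r0]) (use rC in \<open>simp_all add: C_def r_def\<close>)
    have wsum: "(\<Sum>w=1..s. C w) + r = real q - 1" using rr_eq by (simp add: C_def r_def)
    have tail: "(real q - 1) * g W \<le> 2 ^ c * ((1 + \<gamma>) / 2)"
    proof -
      have A: "(real q - 1) / 2 ^ m \<le> 2 ^ c"
      proof -
        have "(real q - 1) / 2 ^ m \<le> real q / 2 ^ m" by (simp add: divide_right_mono)
        also have "\<dots> = 2 ^ c" by (simp add: rq)
        finally show ?thesis .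
      qed
      have "x ^ W \<le> exp (- 2 * f * real W)" by (rule xw)
      also have "\<dots> \<le> exp (- 2 * f * (\<delta> * real m))"
        using W_ge f0 by (simp add: mult_left_mono)
      also have "- 2 * f * (\<delta> * real m) = - (2 * k * \<delta>) * ln (real m)"
      proof -
        have "- 2 * f * (\<delta> * real m) = - 2 * \<delta> * (f * real m)" by (simp add: algebra_simps)
        also have "\<dots> = - (2 * k * \<delta>) * ln (real m)" unfolding fm by (simp add: algebra_simps)
        finally show ?thesis .
      qed
      also have "exp (- (2 * k * \<delta>) * ln (real m)) = real m powr (- (2 * k * \<delta>))"
        using m0 by (simp add: powr_def)
      finally have xW: "x ^ W \<le> real m powr (- (2 * k * \<delta>))" .
      have "real m * x ^ W \<le> real m * real m powr (- (2 * k * \<delta>))"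
        using xW m0 by (intro mult_left_mono) auto
      also have "\<dots> = real m powr (1 - 2 * k * \<delta>)"
        using m0 by (rule powr_aux)
      finally have mxW: "real m * x ^ W \<le> real m powr (1 - 2 * k * \<delta>)" .
      have "(1 + x ^ W) ^ m \<le> exp (x ^ W) ^ m"
        using xw0[of W] by (intro power_mono) auto
      also have "\<dots> = exp (real m * x ^ W)" by (simp add: exp_of_nat_mult[symmetric])
      also have "\<dots> \<le> exp (real m powr (1 - 2 * k * \<delta>))" using mxW by simp
      also have "\<dots> \<le> (1 + \<gamma>) / 2" by (rule H7)
      finally have B: "(1 + x ^ W) ^ m \<le> (1 + \<gamma>) / 2" .
      have "(real q - 1) * g W = (real q - 1) / 2 ^ m * (1 + x ^ W) ^ m" by (simp add: g_def)
      also have "\<dots> \<le> 2 ^ c * ((1 + \<gamma>) / 2)"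
        using A B q2 xw0[of W] by (intro mult_mono) auto
      finally show ?thesis .
    qed
    define \<rho> where "\<rho> = real m powr (1 - k/2) / \<alpha>"
    define E1 where "E1 = exp (- (1/8) * real m)"
    define E2 where "E2 = exp (- (\<epsilon>/2) * real m)"
    have tm: "C w * g w \<le> \<rho> ^ w + E1 + E2" if w1: "1 \<le> w" and wW: "w < W" for w
    proof -
      have wd: "real w < \<delta> * real m" using W_lt[OF wW] .
      have dm: "\<delta> * real m \<le> real n"
      proof -
        have "\<delta> * real m \<le> 1 * real m" using \<delta>half m0 by (intro mult_right_mono) auto
        thus ?thesis using mn_le by linarith
      qed
      have wn: "w \<le> n" using wd dm by linarith
      have w0: "0 < real w" using w1 by simp
      have n0': "0 < n" using n0 by simp
      have gb: "g w \<le> exp (- real m * (1 - x ^ w) / 2)" unfolding g_def by (rule g_exp_bound[OF xw0])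
      have Cg: "C w * g w \<le> C w * exp (- real m * (1 - x ^ w) / 2)"
        using gb C0 by (rule mult_left_mono)
      have E1p: "0 \<le> E1" and E2p: "0 \<le> E2" and \<rho>wp: "0 \<le> \<rho> ^ w"
        using assms by (auto simp: E1_def E2_def \<rho>_def)
      have Cexp: "C w \<le> exp (real w * (1 + ln (real n) - ln (real w)))"
        unfolding C_def by (rule binom_exp_bound[OF w1 n0'])
      define u where "u = 2 * f * real w"
      have u0: "0 \<le> u" using f0 by (simp add: u_def)
      have xu: "x ^ w \<le> exp (- u)" using xw[of w] by (simp add: u_def)
      consider (A) "u \<le> 1" | (B) "1 < u" "real w \<le> \<theta> * real m" | (C) "\<theta> * real m < real w"
        by linarith
      then show ?thesis
      proof cases
        case A
        have "(1 + u) / exp u \<le> 1" using exp_ge_add_one_self[of u] by (simp add: divide_le_eq)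
        moreover have "exp (- u) * (1 + u) = (1 + u) / exp u"
          by (simp add: exp_minus divide_inverse mult.commute)
        ultimately have e1: "exp (- u) * (1 + u) \<le> 1" by simp
        have "u * u \<le> u" using A u0 by (simp add: mult_left_le_one_le)
        moreover have "(1 - u/2) * (1 + u) = 1 + u/2 - u*u/2" by (simp add: field_simps)
        ultimately have "exp (- u) * (1 + u) \<le> (1 - u/2) * (1 + u)" using e1 by linarith
        hence "exp (- u) \<le> 1 - u/2" using u0 by (simp add: mult_le_cancel_right_pos)
        hence "u/2 \<le> 1 - x ^ w" using xu by linarith
        hence "real m * (u/2) \<le> real m * (1 - x ^ w)" using m0 by (intro mult_left_mono) auto
        hence "exp (- real m * (1 - x ^ w) / 2) \<le> exp (- real m * (u/2) / 2)" by (simp add: algebra_simps)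
        also have "- real m * (u/2) / 2 = real w * (- (k/2) * ln (real m))"
        proof -
          have "- real m * (u/2) / 2 = - real w / 2 * (f * real m)" by (simp add: u_def algebra_simps)
          also have "\<dots> = real w * (- (k/2) * ln (real m))" unfolding fm by (simp add: algebra_simps)
          finally show ?thesis .
        qed
        also have "exp (real w * (- (k/2) * ln (real m))) = (real m powr (- (k/2))) ^ w"
        proof -
          have pe: "real m powr (- (k/2)) = exp (- (k/2) * ln (real m))" using m0 by (simp add: powr_def)
          show ?thesis unfolding pe by (rule exp_of_nat_mult)
        qed
        finally have eb: "exp (- real m * (1 - x ^ w) / 2) \<le> (real m powr (- (k/2))) ^ w" .
        have Cn: "C w \<le> real n ^ w" unfolding C_def using binomial_le_pow[OF wn]
          by (metis of_nat_le_iff of_nat_power)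
        have "C w * exp (- real m * (1 - x ^ w) / 2) \<le> real n ^ w * (real m powr (- (k/2))) ^ w"
          using Cn eb C0 by (intro mult_mono) auto
        also have "\<dots> = (real n * real m powr (- (k/2))) ^ w" by (simp add: power_mult_distrib)
        also have "real n * real m powr (- (k/2)) = \<rho>"
        proof -
          have "real n * real m powr (- (k/2)) = (real m * real m powr (- (k/2))) / \<alpha>"
            using n_eq by simp
          also have "real m * real m powr (- (k/2)) = real m powr (1 - k/2)"
            using m0 by (rule powr_aux)
          finally show ?thesis by (simp add: \<rho>_def)
        qed
        finally show ?thesis using Cg E1p E2p by linarith
      next
        case B
        have "exp (1::real) \<ge> 2" using exp_ge_add_one_self[of "1::real"] by simp
        hence "exp (- 1) \<le> (1/2::real)" by (simp add: exp_minus' divide_le_eq)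
        moreover have "exp (- u) \<le> exp (- 1)" using B by simp
        ultimately have "x ^ w \<le> 1/2" using xu by linarith
        hence "real m * (1/2) \<le> real m * (1 - x ^ w)" using m0 by (intro mult_left_mono) auto
        hence eb: "exp (- real m * (1 - x ^ w) / 2) \<le> exp (- real m / 4)" by (simp add: algebra_simps)
        have tn: "\<theta> * real m \<le> real n"
        proof -
          have "\<theta> * real m \<le> 1 * real m" using \<theta>1 m0 by (intro mult_right_mono) auto
          thus ?thesis using mn_le by linarith
        qed
        have "real w * (1 + ln (real n) - ln (real w))
            \<le> (\<theta> * real m) * (1 + ln (real n) - ln (\<theta> * real m))"
          by (rule Phi_mono[OF w0 B(2) tn])
        also have "\<dots> = real m * (\<theta> * (1 + a - ln \<theta>))"
          using \<theta>0 m0 by (simp add: lnn ln_mult algebra_simps)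
        also have "\<dots> \<le> real m * (1/8)" using \<theta>b m0 by (intro mult_left_mono) auto
        finally have "C w \<le> exp (real m * (1/8))" using Cexp by (meson exp_le_cancel_iff order.trans)
        hence "C w * exp (- real m * (1 - x ^ w) / 2) \<le> exp (real m * (1/8)) * exp (- real m / 4)"
          using eb C0 by (intro mult_mono) auto
        also have "\<dots> = E1" by (simp add: E1_def exp_add[symmetric])
        finally show ?thesis using Cg \<rho>wp E2p by linarith
      next
        case C
        have "exp (- u) \<le> exp (- 2 * f * (\<theta> * real m))"
          using C f0 by (simp add: u_def mult_left_mono)
        also have "- 2 * f * (\<theta> * real m) = - (2 * k * \<theta>) * ln (real m)"
        proof -
          have "- 2 * f * (\<theta> * real m) = - 2 * \<theta> * (f * real m)" by (simp add: algebra_simps)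
          also have "\<dots> = - (2 * k * \<theta>) * ln (real m)" unfolding fm by (simp add: algebra_simps)
          finally show ?thesis .
        qed
        also have "exp (- (2 * k * \<theta>) * ln (real m)) = real m powr (- (2 * k * \<theta>))"
          using m0 by (simp add: powr_def)
        finally have "x ^ w \<le> real m powr (- (2 * k * \<theta>))" using xu by linarith
        hence "real m * x ^ w \<le> real m * real m powr (- (2 * k * \<theta>))"
          using m0 by (intro mult_left_mono) auto
        also have "\<dots> = real m powr (1 - 2 * k * \<theta>)"
          using m0 by (rule powr_aux)
        finally have "real m * x ^ w \<le> \<epsilon> * real m" using H5 by linarith
        moreover have "- real m * (1 - x ^ w) / 2 = - real m / 2 + real m * x ^ w / 2"
          by (simp add: field_simps)
        ultimately have "- real m * (1 - x ^ w) / 2 \<le> - real m / 2 + \<epsilon> * real m / 2" by linarith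
        hence eb: "exp (- real m * (1 - x ^ w) / 2) \<le> exp (- real m / 2 + \<epsilon> * real m / 2)"
          by simp
        have "real w * (1 + ln (real n) - ln (real w))
            \<le> (\<delta> * real m) * (1 + ln (real n) - ln (\<delta> * real m))"
          using wd by (intro Phi_mono[OF w0 _ dm]) simp
        also have "\<dots> = real m * (\<delta> * (1 + a - ln \<delta>))"
          using \<delta>0 m0 by (simp add: lnn ln_mult algebra_simps)
        also have "\<dots> \<le> real m * (\<delta> * l)"
        proof -
          have "ln (2 * k * \<delta>) = ln 2 + ln k + ln \<delta>" using k1 \<delta>0 by (simp add: ln_mult)
          moreover have "0 \<le> ln (2 * k * \<delta>)" using \<delta>k by simp
          ultimately have "1 + a - ln \<delta> \<le> l" by (simp add: l_def)
          hence dd: "\<delta> * (1 + a - ln \<delta>) \<le> \<delta> * l" using \<delta>0 by (intro mult_left_mono) auto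
          show ?thesis by (rule mult_left_mono[OF dd]) (use m0 in simp)
        qed
        also have "\<dots> = real m * (1/2 - \<epsilon>)" using \<delta>l by simp
        finally have "C w \<le> exp (real m * (1/2 - \<epsilon>))" using Cexp by (meson exp_le_cancel_iff order.trans)
        hence "C w * exp (- real m * (1 - x ^ w) / 2)
            \<le> exp (real m * (1/2 - \<epsilon>)) * exp (- real m / 2 + \<epsilon> * real m / 2)"
          using eb C0 by (intro mult_mono) auto
        also have "\<dots> = E2" by (simp add: E2_def exp_add[symmetric] algebra_simps)
        finally show ?thesis using Cg \<rho>wp E1p by linarith
      qed
    qed
    have \<rho>0: "0 \<le> \<rho>" using assms by (simp add: \<rho>_def)
    have \<rho>h: "\<rho> \<le> 1/2" and \<rho>g: "\<rho> \<le> (\<gamma>-1)/12" using H3 by (auto simp: \<rho>_def)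
    have terms: "(\<Sum>w\<in>{1..<W}. C w * g w) \<le> (\<gamma> - 1) / 2"
    proof -
      have "(\<Sum>w\<in>{1..<W}. C w * g w) \<le> (\<Sum>w\<in>{1..<W}. \<rho> ^ w + (E1 + E2))"
        by (intro sum_mono) (use tm in \<open>auto simp: add.assoc\<close>)
      also have "\<dots> = (\<Sum>w\<in>{1..<W}. \<rho> ^ w) + real (W - 1) * (E1 + E2)"
        by (simp add: sum.distrib)
      also have "\<dots> \<le> 2 * \<rho> + real m * (E1 + E2)"
      proof -
        have "real (W - 1) \<le> real m" using W_le by simp
        hence "real (W - 1) * (E1 + E2) \<le> real m * (E1 + E2)"
          by (intro mult_right_mono) (auto simp: E1_def E2_def intro: add_nonneg_nonneg)
        thus ?thesis using geom_sum_bound[OF \<rho>0 \<rho>h, of W] by linarith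
      qed
      also have "\<dots> \<le> (\<gamma> - 1) / 2" using \<rho>g H4 H6 by (simp add: E1_def E2_def algebra_simps)
      finally show ?thesis .
    qed
    have c1: "1 \<le> (2::real) ^ c" by simp
    have q1: "0 < real q - 1" using q2 by simp
    have "(\<Sum>w=1..s. C w * g w) + r * g (s+1) \<le> (\<gamma> - 1) / 2 + 2 ^ c * ((1 + \<gamma>) / 2)"
      using dec[unfolded wsum] tail terms by linarith
    also have "\<dots> \<le> \<gamma> * 2 ^ c"
    proof -
      have "1 * ((\<gamma> - 1) / 2) \<le> 2 ^ c * ((\<gamma> - 1) / 2)"
        by (rule mult_right_mono[OF c1]) (use g1 in simp)
      moreover have "2 ^ c * ((1 + \<gamma>) / 2) + 2 ^ c * ((\<gamma> - 1) / 2) = \<gamma> * (2::real) ^ c"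
        by (simp add: field_simps)
      ultimately show ?thesis by linarith
    qed
    finally have br: "(\<Sum>w=1..s. C w * g w) + r * g (s+1) \<le> \<gamma> * 2 ^ c" .
    have "eps n m q f \<le> \<gamma> * 2 ^ c / (real q - 1)"
      unfolding eps_eq using br q1 by (simp add: divide_right_mono)
    thus "eps n m (2 ^ (m + c)) (k * ln (real m) / real m)
         \<le> \<gamma> * 2 ^ c / (real ((2::nat) ^ (m + c)) - 1)"
      by (simp add: q_def f_def)
    qed
  qed
qed

end
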